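(* Let $A: E\supseteq D(A)\to E$ be a closed linear operator on a complex Banach space $E$. Assume that all sufficiently large real numbers $\lambda$ belong to $\rho(A)$ and that $\lambda R(\lambda,A)$ is bounded in operator norm as $\lambda\to\infty$. If there exist $\mu_0\in\rho(A)$ and an integer $k\ge1$ such that $R(\mu_0,A)^k$ is compact, then $R(\lambda,A)$ is compact for every $\lambda\in\rho(A)$.
   Context: $R(\lambda,A)=(\lambda-A)^{-1}$ and $\rho(A)$ is the resolvent set. *)

theory Defs
  imports "HOL-Analysis.Analysis"
begin

class complex_vector_c = real_vector +
  fixes scaleC :: "complex \<Rightarrow> 'a \<Rightarrow> 'a" (infixr \<open>*\<^sub>C\<close> 75)
  assumes scaleC_add_right: "a *\<^sub>C (x + y) = a *\<^sub>C x + a *\<^sub>C y"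
    and scaleC_add_left: "(a + b) *\<^sub>C x = a *\<^sub>C x + b *\<^sub>C x"
    and scaleC_scaleC: "a *\<^sub>C (b *\<^sub>C x) = (a * b) *\<^sub>C x"
    and scaleC_one: "1 *\<^sub>C x = x"
    and scaleC_of_real: "(complex_of_real r) *\<^sub>C x = r *\<^sub>R x"

class complex_normed_vector_c = complex_vector_c + real_normed_vector +
  assumes norm_scaleC: "norm (a *\<^sub>C x) = cmod a * norm x"

class complex_banach = complex_normed_vector_c + banach

text \<open>A (possibly unbounded) linear operator A with domain D is modelled by the pair (D, A);
  values of A outside D are irrelevant.\<close>

definition closed_operator :: "'a::complex_banach set \<Rightarrow> ('a \<Rightarrow> 'a) \<Rightarrow> bool" where
  "closed_operator D A \<longleftrightarrow>
     0 \<in> D \<and> (\<forall>x\<in>D. \<forall>y\<in>D. x + y \<in> D) \<and> (\<forall>c. \<forall>x\<in>D. c *\<^sub>C x \<in> D) \<and>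
     (\<forall>x\<in>D. \<forall>y\<in>D. A (x + y) = A x + A y) \<and> (\<forall>c. \<forall>x\<in>D. A (c *\<^sub>C x) = c *\<^sub>C A x) \<and>
     closed {(x, A x) | x. x \<in> D}"

definition is_resolvent :: "'a::complex_banach set \<Rightarrow> ('a \<Rightarrow> 'a) \<Rightarrow> complex \<Rightarrow> ('a \<Rightarrow> 'a) \<Rightarrow> bool" where
  "is_resolvent D A l R \<longleftrightarrow>
     bounded_linear R \<and> (\<forall>y. R y \<in> D \<and> l *\<^sub>C R y - A (R y) = y) \<and>
     (\<forall>x\<in>D. R (l *\<^sub>C x - A x) = x)"

definition resolvent_set :: "'a::complex_banach set \<Rightarrow> ('a \<Rightarrow> 'a) \<Rightarrow> complex set" where
  "resolvent_set D A = {l. \<exists>R. is_resolvent D A l R}"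

definition resolvent :: "'a::complex_banach set \<Rightarrow> ('a \<Rightarrow> 'a) \<Rightarrow> complex \<Rightarrow> 'a \<Rightarrow> 'a" where
  "resolvent D A l = (SOME R. is_resolvent D A l R)"

definition compact_operator :: "('a::real_normed_vector \<Rightarrow> 'b::real_normed_vector) \<Rightarrow> bool" where
  "compact_operator T \<longleftrightarrow> bounded_linear T \<and> compact (closure (T ` ball 0 1))"


instantiation complex :: complex_banach
begin
definition scaleC_complex :: "complex \<Rightarrow> complex \<Rightarrow> complex" where "scaleC_complex a x = a * x"
instance by standard (auto simp: scaleC_complex_def algebra_simps norm_mult scaleR_conv_of_real)
end

end

theory Submission
  imports Defs
begin

lemma scaleC_zero_right: "(c::complex) *\<^sub>C (0::'a::complex_vector_c) = 0"
proof -
  have "c *\<^sub>C (0::'a) = c *\<^sub>C 0 + c *\<^sub>C 0" by (metis add.right_neutral scaleC_add_right)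
  then show ?thesis by simp
qed

lemma scaleC_zero_left: "(0::complex) *\<^sub>C (x::'a::complex_vector_c) = 0"
  by (metis of_real_0 scaleC_of_real scale_zero_left)

lemma scaleC_diff_right: "(c::complex) *\<^sub>C ((a::'a::complex_vector_c) - b) = c *\<^sub>C a - c *\<^sub>C b"
proof -
  have "c *\<^sub>C a = c *\<^sub>C (a - b) + c *\<^sub>C b" by (metis diff_add_cancel scaleC_add_right)
  then show ?thesis by (simp add: algebra_simps)
qed

lemma scaleC_neg_left: "(- c) *\<^sub>C (x::'a::complex_vector_c) = - (c *\<^sub>C x)"
proof -
  have "(-c) *\<^sub>C x + c *\<^sub>C x = 0" by (metis add.left_inverse scaleC_add_left scaleC_zero_left)
  then show ?thesis by (simp add: eq_neg_iff_add_eq_0)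
qed

lemma scaleC_scaleR_comm: "(c::complex) *\<^sub>C (r *\<^sub>R (x::'a::complex_vector_c)) = r *\<^sub>R (c *\<^sub>C x)"
  by (metis mult.commute scaleC_of_real scaleC_scaleC)

lemma bounded_linear_scaleC: "bounded_linear (\<lambda>x::'a::complex_normed_vector_c. c *\<^sub>C x)"
  by (rule bounded_linear_intro[where K="cmod c"])
     (auto simp: scaleC_add_right scaleC_scaleR_comm norm_scaleC mult.commute)

lemma res_clinear:
  assumes cl: "closed_operator D A" and r: "is_resolvent D A l R"
  shows "R (c *\<^sub>C z) = c *\<^sub>C R z"
proof -
  from r have RD: "R z \<in> D" and Rz: "l *\<^sub>C R z - A (R z) = z"
    and inv: "\<forall>x\<in>D. R (l *\<^sub>C x - A x) = x" by (auto simp: is_resolvent_def)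
  let ?w = "c *\<^sub>C R z"
  have wD: "?w \<in> D" using cl RD by (auto simp: closed_operator_def)
  have Aw: "A ?w = c *\<^sub>C A (R z)" using cl RD by (auto simp: closed_operator_def)
  have "l *\<^sub>C ?w - A ?w = c *\<^sub>C (l *\<^sub>C R z - A (R z))"
    by (simp add: Aw scaleC_diff_right scaleC_scaleC mult.commute)
  also have "\<dots> = c *\<^sub>C z" using Rz by simp
  finally show ?thesis using inv wD by metis
qed

lemma res_identity:
  assumes cl: "closed_operator D A" and r: "is_resolvent D A l R" and q: "is_resolvent D A m Q"
  shows "R y = Q y + (m - l) *\<^sub>C R (Q y)"
proof -
  define x where "x = Q y"
  from q have xD: "x \<in> D" and qx: "m *\<^sub>C x - A x = y" by (auto simp: is_resolvent_def x_def)
  from r have inv: "R (l *\<^sub>C x - A x) = x" and bl: "bounded_linear R"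
    using xD by (auto simp: is_resolvent_def)
  have lin: "linear R" using bl by (rule bounded_linear.linear)
  have ls: "l *\<^sub>C x = m *\<^sub>C x + (l - m) *\<^sub>C x" using scaleC_add_left[of m "l - m" x] by simp
  have "l *\<^sub>C x - A x = (m *\<^sub>C x + (l - m) *\<^sub>C x) - A x" by (simp only: ls)
  also have "\<dots> = (m *\<^sub>C x - A x) + (l - m) *\<^sub>C x" by (simp only: diff_add_eq)
  also have "\<dots> = y + (l - m) *\<^sub>C x" by (simp only: qx)
  finally have e1: "l *\<^sub>C x - A x = y + (l - m) *\<^sub>C x" .
  have "x = R (y + (l - m) *\<^sub>C x)" using inv e1 by simp
  also have "\<dots> = R y + R ((l - m) *\<^sub>C x)" by (rule real_vector.linear_add[OF lin])
  also have "R ((l - m) *\<^sub>C x) = (l - m) *\<^sub>C R x" by (rule res_clinear[OF cl r])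
  finally have e2: "x = R y + (l - m) *\<^sub>C R x" .
  have e3: "(l - m) *\<^sub>C R x = - ((m - l) *\<^sub>C R x)"
    by (metis minus_diff_eq scaleC_neg_left)
  have "R y = x - (l - m) *\<^sub>C R x" using e2 by (metis add_diff_cancel_right')
  also have "\<dots> = x + (m - l) *\<^sub>C R x" by (simp only: e3 diff_minus_eq_add)
  finally show ?thesis by (simp only: x_def)
qed

lemma compact_op_comp:
  assumes K: "compact_operator K" and B: "bounded_linear B"
  shows "compact_operator (\<lambda>x. B (K x))"
proof -
  have blK: "bounded_linear K" and cK: "compact (closure (K ` ball 0 1))"
    using K by (auto simp: compact_operator_def)
  have cB: "compact (B ` closure (K ` ball 0 1))"
    by (rule compact_continuous_image[OF linear_continuous_on[OF B] cK])
  have sub: "(\<lambda>x. B (K x)) ` ball 0 1 \<subseteq> B ` closure (K ` ball 0 1)"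
    using closure_subset by fastforce
  have "closure ((\<lambda>x. B (K x)) ` ball 0 1) \<subseteq> B ` closure (K ` ball 0 1)"
    by (rule closure_minimal[OF sub compact_imp_closed[OF cB]])
  then have eq: "B ` closure (K ` ball 0 1) \<inter> closure ((\<lambda>x. B (K x)) ` ball 0 1) = closure ((\<lambda>x. B (K x)) ` ball 0 1)"
    by blast
  have "compact (B ` closure (K ` ball 0 1) \<inter> closure ((\<lambda>x. B (K x)) ` ball 0 1))"
    by (rule compact_Int_closed[OF cB closed_closure])
  then have "compact (closure ((\<lambda>x. B (K x)) ` ball 0 1))"
    by (simp only: eq)
  moreover have "bounded_linear (\<lambda>x. B (K x))"
    using bounded_linear_compose[OF B blK] .
  ultimately show ?thesis by (simp add: compact_operator_def)
qed

lemma compact_op_approx: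
  fixes T :: "'a::real_normed_vector \<Rightarrow> 'b::banach"
  assumes T: "bounded_linear T"
    and ap: "\<And>e. e > 0 \<Longrightarrow> \<exists>K. compact_operator K \<and> (\<forall>x. norm x < 1 \<longrightarrow> norm (T x - K x) \<le> e)"
  shows "compact_operator T"
proof -
  let ?S = "closure (T ` ball 0 1)"
  have "compact ?S"
    unfolding compact_eq_totally_bounded
  proof (intro conjI allI impI)
    show "complete ?S" by (simp add: complete_eq_closed)
    fix e :: real assume e: "e > 0"
    obtain K where K: "compact_operator K" and Kx: "\<forall>x. norm x < 1 \<longrightarrow> norm (T x - K x) \<le> e/4"
      using ap[of "e/4"] e by auto
    have "compact (closure (K ` ball 0 1))" using K by (simp add: compact_operator_def)
    then obtain k where fk: "finite k" and kc: "closure (K ` ball 0 1) \<subseteq> (\<Union>x\<in>k. ball x (e/4))"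
      unfolding compact_eq_totally_bounded using e by (meson divide_pos_pos zero_less_numeral)
    have "?S \<subseteq> (\<Union>x\<in>k. ball x e)"
    proof
      fix y assume "y \<in> ?S"
      then obtain z where z: "z \<in> T ` ball 0 1" and dz: "dist y z < e/4"
        using closure_approachableD[of y "T ` ball 0 1" "e/4"] e by auto
      then obtain x where x: "norm x < 1" and zx: "z = T x" by auto
      have "K x \<in> closure (K ` ball 0 1)" using x closure_subset by fastforce
      then obtain c where c: "c \<in> k" and dc: "dist c (K x) < e/4" using kc by auto
      have "dist z (K x) \<le> e/4" using Kx x zx by (simp add: dist_norm)
      have t1: "dist c y \<le> dist c (K x) + dist (K x) y" by (rule dist_triangle)
      have t2: "dist (K x) y \<le> dist (K x) z + dist z y" by (rule dist_triangle)
      have "dist (K x) z = dist z (K x)" "dist z y = dist y z" by (simp_all add: dist_commute)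
      then have "dist c y < e"
        using dz dc t1 t2 \<open>dist z (K x) \<le> e/4\<close> \<open>e > 0\<close> by linarith
      then show "y \<in> (\<Union>x\<in>k. ball x e)" using c by auto
    qed
    then show "\<exists>k. finite k \<and> ?S \<subseteq> (\<Union>x\<in>k. ball x e)" using fk by blast
  qed
  then show ?thesis using T by (simp add: compact_operator_def)
qed

lemma bl_funpow: "bounded_linear (S::'a::real_normed_vector \<Rightarrow> 'a) \<Longrightarrow> bounded_linear (S ^^ n)"
proof (induction n)
  case 0
  show ?case by (simp add: id_def bounded_linear_ident)
next
  case (Suc n)
  then have "bounded_linear (\<lambda>x. S ((S ^^ n) x))" using bounded_linear_compose by blast
  moreover have "S ^^ Suc n = (\<lambda>x. S ((S ^^ n) x))" by (rule ext) simp
  ultimately show ?case by simp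
qed


lemma res_some: "l \<in> resolvent_set D A \<Longrightarrow> is_resolvent D A l (resolvent D A l)"
proof -
  assume "l \<in> resolvent_set D A"
  then obtain R where "is_resolvent D A l R" unfolding resolvent_set_def by blast
  then show ?thesis unfolding resolvent_def by (rule someI[where P="is_resolvent D A l"])
qed

lemma bl_res_comb:
  assumes "bounded_linear R"
  shows "bounded_linear (\<lambda>y::'a::complex_normed_vector_c. a *\<^sub>C (y + c *\<^sub>C R y))"
proof -
  have "bounded_linear (\<lambda>y. c *\<^sub>C R y)"
    using bounded_linear_compose[OF bounded_linear_scaleC assms] .
  then have "bounded_linear (\<lambda>y. y + c *\<^sub>C R y)"
    using bounded_linear_add[OF bounded_linear_ident] by blast
  then show ?thesis using bounded_linear_compose[OF bounded_linear_scaleC] by blast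
qed

lemma step:
  fixes S :: "'a::complex_banach \<Rightarrow> 'a"
  assumes cl: "closed_operator D A" and rS: "is_resolvent D A \<mu>0 S"
    and bnd: "\<And>t. t \<ge> t1 \<Longrightarrow> t > 0 \<and> is_resolvent D A (complex_of_real t) (Rt t) \<and>
                  (\<forall>z. t * norm (Rt t z) \<le> M * norm z)"
    and M: "M \<ge> 0"
    and cK: "compact_operator (S ^^ Suc (Suc m))"
  shows "compact_operator (S ^^ Suc m)"
proof -
  have blS: "bounded_linear S" using rS by (simp add: is_resolvent_def)
  have blP: "bounded_linear (S ^^ m)" by (rule bl_funpow[OF blS])
  have blT: "bounded_linear (S ^^ Suc m)" by (rule bl_funpow[OF blS])
  define C where "C = onorm (S ^^ m)"
  define N where "N = onorm S"
  have C0: "C \<ge> 0" unfolding C_def by (rule onorm_pos_le[OF blP])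
  have N0: "N \<ge> 0" unfolding N_def by (rule onorm_pos_le[OF blS])
  have Pb: "norm ((S ^^ m) x) \<le> C" if "norm x < 1" for x
  proof -
    have "norm ((S ^^ m) x) \<le> C * norm x" unfolding C_def by (rule onorm[OF blP])
    also have "\<dots> \<le> C * 1" using that C0 by (intro mult_left_mono) auto
    finally show ?thesis by simp
  qed
  define Q where "Q = (1 + cmod \<mu>0 * N) * C"
  have Q0: "Q \<ge> 0" unfolding Q_def using C0 N0 by simp
  show ?thesis
  proof (rule compact_op_approx[OF blT])
    fix e :: real assume e: "e > 0"
    define t where "t = max t1 (M * Q / e + 1)"
    have tt1: "t \<ge> t1" unfolding t_def by simp
    from bnd[OF tt1] have t0: "t > 0" and rt: "is_resolvent D A (complex_of_real t) (Rt t)"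
      and nb: "\<And>z. t * norm (Rt t z) \<le> M * norm z" by auto
    have te: "t * e \<ge> M * Q + e"
    proof -
      have "t \<ge> M * Q / e + 1" unfolding t_def by simp
      then have "t * e \<ge> (M * Q / e + 1) * e" using e by (intro mult_right_mono) auto
      also have "(M * Q / e + 1) * e = M * Q + e" using e by (simp add: field_simps)
      finally show ?thesis by simp
    qed
    have blRt: "bounded_linear (Rt t)" using rt by (simp add: is_resolvent_def)
    define K where "K = (\<lambda>x. complex_of_real t *\<^sub>C ((S ^^ Suc (Suc m)) x + (\<mu>0 - complex_of_real t) *\<^sub>C Rt t ((S ^^ Suc (Suc m)) x)))"
    have compK: "compact_operator K"
      unfolding K_def by (rule compact_op_comp[OF cK bl_res_comb[OF blRt]])
    have Kx: "K x = complex_of_real t *\<^sub>C Rt t ((S ^^ Suc m) x)" for x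
    proof -
      have "Rt t ((S ^^ Suc m) x) = S ((S ^^ Suc m) x) + (\<mu>0 - complex_of_real t) *\<^sub>C Rt t (S ((S ^^ Suc m) x))"
        by (rule res_identity[OF cl rt rS])
      moreover have "S ((S ^^ Suc m) x) = (S ^^ Suc (Suc m)) x" by simp
      ultimately show ?thesis unfolding K_def by simp
    qed
    have "norm ((S ^^ Suc m) x - K x) \<le> e" if x: "norm x < 1" for x
    proof -
      define w where "w = (S ^^ m) x"
      have Tx: "(S ^^ Suc m) x = S w" unfolding w_def by simp
      have nw: "norm w \<le> C" unfolding w_def by (rule Pb[OF x])
      have w0: "norm w \<ge> 0" by simp
      define v where "v = Rt t (S w)"
      have idw: "Rt t w = S w + (\<mu>0 - complex_of_real t) *\<^sub>C v"
        unfolding v_def by (rule res_identity[OF cl rt rS])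
      have split: "(\<mu>0 - complex_of_real t) *\<^sub>C v = \<mu>0 *\<^sub>C v - complex_of_real t *\<^sub>C v"
        using scaleC_add_left[of "\<mu>0 - complex_of_real t" "complex_of_real t" v] by simp
      have diff: "S w - complex_of_real t *\<^sub>C v = Rt t w - \<mu>0 *\<^sub>C v"
        using idw split by (simp add: algebra_simps)
      have "(S ^^ Suc m) x - K x = S w - complex_of_real t *\<^sub>C v"
        by (simp only: Kx Tx v_def)
      also note diff
      finally have "(S ^^ Suc m) x - K x = Rt t w - \<mu>0 *\<^sub>C v" .
      then have "norm ((S ^^ Suc m) x - K x) \<le> norm (Rt t w) + cmod \<mu>0 * norm v"
        using norm_triangle_ineq4[of "Rt t w" "\<mu>0 *\<^sub>C v"] by (simp add: norm_scaleC)
      then have "t * norm ((S ^^ Suc m) x - K x) \<le> t * (norm (Rt t w) + cmod \<mu>0 * norm v)"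
        using t0 by (intro mult_left_mono) auto
      also have "\<dots> = t * norm (Rt t w) + cmod \<mu>0 * (t * norm v)" by (simp add: algebra_simps)
      also have "\<dots> \<le> M * norm w + cmod \<mu>0 * (M * norm (S w))"
        using nb[of w] nb[of "S w"] unfolding v_def
        by (intro add_mono mult_left_mono) auto
      also have "\<dots> \<le> M * norm w + cmod \<mu>0 * (M * (N * norm w))"
        using onorm[OF blS, of w] M unfolding N_def
        by (intro add_mono mult_left_mono) auto
      also have "\<dots> = M * ((1 + cmod \<mu>0 * N) * norm w)" by (simp add: algebra_simps)
      also have "\<dots> \<le> M * Q"
        unfolding Q_def using nw M N0 by (intro mult_left_mono) auto
      also have "\<dots> \<le> t * e" using te e by simp
      finally show ?thesis using t0 by simp
    qed
    then show "\<exists>K. compact_operator K \<and> (\<forall>x. norm x < 1 \<longrightarrow> norm ((S ^^ Suc m) x - K x) \<le> e)"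
      using compK by blast
  qed
qed

theorem proposition3p2:
  fixes D :: "'a::complex_banach set" and A :: "'a \<Rightarrow> 'a"
  assumes "closed_operator D A"
    and "\<exists>t0 M. \<forall>t::real. t \<ge> t0 \<longrightarrow>
           complex_of_real t \<in> resolvent_set D A \<and>
           onorm (\<lambda>x. complex_of_real t *\<^sub>C resolvent D A (complex_of_real t) x) \<le> M"
    and "\<mu>0 \<in> resolvent_set D A" and "(k::nat) \<ge> 1"
    and "compact_operator (resolvent D A \<mu>0 ^^ k)"
  shows "\<forall>l\<in>resolvent_set D A. compact_operator (resolvent D A l)"
proof
  note cl = assms(1)
  obtain t0 M where tM: "\<And>t::real. t \<ge> t0 \<Longrightarrow>
           complex_of_real t \<in> resolvent_set D A \<and>
           onorm (\<lambda>x. complex_of_real t *\<^sub>C resolvent D A (complex_of_real t) x) \<le> M"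
    using assms(2) by blast
  define S where "S = resolvent D A \<mu>0"
  have rS: "is_resolvent D A \<mu>0 S" unfolding S_def by (rule res_some[OF assms(3)])
  define t1 where "t1 = max t0 1"
  define Rt where "Rt = (\<lambda>t::real. resolvent D A (complex_of_real t))"
  have bnd: "t > 0 \<and> is_resolvent D A (complex_of_real t) (Rt t) \<and>
                  (\<forall>z. t * norm (Rt t z) \<le> \<bar>M\<bar> * norm z)" if t: "t \<ge> t1" for t
  proof -
    have t0': "t \<ge> t0" and tpos: "t > 0" using t by (auto simp: t1_def)
    from tM[OF t0'] have mem: "complex_of_real t \<in> resolvent_set D A"
      and on: "onorm (\<lambda>x. complex_of_real t *\<^sub>C Rt t x) \<le> M" unfolding Rt_def by auto
    have rt: "is_resolvent D A (complex_of_real t) (Rt t)" unfolding Rt_def by (rule res_some[OF mem])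
    have bl: "bounded_linear (\<lambda>x. complex_of_real t *\<^sub>C Rt t x)"
      using rt bounded_linear_compose[OF bounded_linear_scaleC] by (auto simp: is_resolvent_def)
    have "\<forall>z. t * norm (Rt t z) \<le> \<bar>M\<bar> * norm z"
    proof
      fix z
      have "norm (complex_of_real t *\<^sub>C Rt t z) \<le> onorm (\<lambda>x. complex_of_real t *\<^sub>C Rt t x) * norm z"
        by (rule onorm[OF bl])
      also have "\<dots> \<le> \<bar>M\<bar> * norm z" using on by (intro mult_right_mono) auto
      finally show "t * norm (Rt t z) \<le> \<bar>M\<bar> * norm z" using tpos by (simp add: norm_scaleC)
    qed
    then show ?thesis using tpos rt by blast
  qed
  obtain k' where k: "k = Suc k'" using assms(4) by (cases k) auto
  have "compact_operator (S ^^ Suc (k' - i))" for i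
  proof (induction i)
    case 0
    then show ?case using assms(5) by (simp only: S_def k diff_zero)
  next
    case (Suc i)
    show ?case
    proof (cases "k' - i = 0")
      case True
      then have "k' - Suc i = k' - i" by simp
      then show ?thesis using Suc by simp
    next
      case False
      then have eq: "k' - i = Suc (k' - Suc i)" by simp
      show ?thesis
        by (rule step[OF cl rS bnd _ Suc[unfolded eq]]) auto
    qed
  qed
  from this[of k'] have cS: "compact_operator S"
  proof -
    have "S ^^ Suc 0 = S" by (rule ext) simp
    then show ?thesis using \<open>compact_operator (S ^^ Suc (k' - k'))\<close> by simp
  qed
  fix l assume l: "l \<in> resolvent_set D A"
  have rl: "is_resolvent D A l (resolvent D A l)" by (rule res_some[OF l])
  have bl: "bounded_linear (resolvent D A l)" using rl by (simp add: is_resolvent_def)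
  have "compact_operator (\<lambda>x. 1 *\<^sub>C (S x + (\<mu>0 - l) *\<^sub>C resolvent D A l (S x)))"
    by (rule compact_op_comp[OF cS bl_res_comb[OF bl]])
  moreover have "(\<lambda>x. 1 *\<^sub>C (S x + (\<mu>0 - l) *\<^sub>C resolvent D A l (S x))) = resolvent D A l"
  proof
    fix x show "1 *\<^sub>C (S x + (\<mu>0 - l) *\<^sub>C resolvent D A l (S x)) = resolvent D A l x"
      using res_identity[OF cl rl rS, of x] by (simp add: scaleC_one)
  qed
  ultimately show "compact_operator (resolvent D A l)" by simp
qed

end
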